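(* Consider an instance of the Steiner Team Orienteering Problem and the formulation $\mathcal{F}_2$ as described in the context, and let $\mathcal{K}$ be the set of conflicting vertex pairs. For every feasible solution $(x,y,f,\varphi)$ of $\mathcal{F}_2$, every pair $\langle i,j\rangle\in\mathcal{K}$ and every $V\subseteq N\setminus\{s\}$ with $\{i,j\}\subseteq V$, we have $\sum_{e\in\delta^-(V)}x_e\ge y_i+y_j$.
   Context: An instance of the Steiner Team Orienteering Problem (STOP) consists of: a digraph $G=(N,A)$; an origin $s\in N$ and a destination $t\in N$ with $s\neq t$; disjoint sets $S,P\subseteq N\setminus\{s,t\}$ (mandatory and profitable vertices) with $N=S\cup P\cup\{s,t\}$; rewards $p_i\in\mathbb{Z}^+$ for $i\in P$; traverse times $d_{ij}\in\mathbb{R}^+$ for $(i,j)\in A$; a number $m$ of vehicles and a time limit $T$. For $i\in N$ let $\delta^+(i)=\{j\in N:(i,j)\in A\}$ and $\delta^-(i)=\{j\in N:(j,i)\in A\}$; for $V\subseteq N$ let $\delta^+(V)=\{(i,j)\in A: i\in V, j\in N\setminus V\}$ and $\delta^-(V)=\{(i,j)\in A: i\in N\setminus V, j\in V\}$. For $i,j\in N$, $R_{ij}$ denotes the minimum of $\sum_{a\in A_p}d_a$ over all paths $p$ from $i$ to $j$ in $G$ (with arc set $A_p$), and $R_{ii}=0$. $\mathcal{K}$ is the set of pairs $\langle i,j\rangle$ with $i,j\in N\setminus\{s,t\}$ such that every route from $s$ to $t$ in $G$ visiting both $i$ and $j$ (in any order) has total traverse time (sum of $d$ over its arcs) exceeding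 $T$. $\mathcal{F}_2$: maximize $\sum_{i\in P}p_iy_i$ over $x\in\{0,1\}^A$, $y\in\{0,1\}^N$, $f\in\mathbb{R}^A$, $\varphi\in\mathbb{R}$ subject to: $y_i=1$ for all $i\in S\cup\{s,t\}$; $\sum_{j\in\delta^+(i)}x_{ij}=y_i$ for all $i\in S\cup P$; $\sum_{j\in\delta^+(s)}x_{sj}=\sum_{i\in\delta^-(t)}x_{it}=m-\varphi$; $\sum_{i\in\delta^-(s)}x_{is}=\sum_{j\in\delta^+(t)}x_{tj}=0$; $\sum_{j\in\delta^+(i)}x_{ij}-\sum_{j\in\delta^-(i)}x_{ji}=0$ for all $i\in S\cup P$; $f_{sj}=(T-d_{sj})x_{sj}$ for all $j\in\delta^+(s)$; $\sum_{j\in\delta^-(i)}f_{ji}-\sum_{j\in\delta^+(i)}f_{ij}=\sum_{j\in\delta^+(i)}d_{ij}x_{ij}$ for all $i\in S\cup P$; $f_{ij}\le(T-R_{si}-d_{ij})x_{ij}$ for all $(i,j)\in A$ with $i\neq s$; $f_{ij}\ge R_{jt}x_{ij}$ for all $(i,j)\in A$; $f\ge0$; $0\le\varphi\le m$. *)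

theory Defs
  imports Complex_Main "HOL-Library.Extended_Real"
begin

definition out_nbrs :: "('v \<times> 'v) set \<Rightarrow> 'v \<Rightarrow> 'v set" where
  "out_nbrs A i = {j. (i, j) \<in> A}"

definition in_nbrs :: "('v \<times> 'v) set \<Rightarrow> 'v \<Rightarrow> 'v set" where
  "in_nbrs A i = {j. (j, i) \<in> A}"

definition delta_in_set :: "('v \<times> 'v) set \<Rightarrow> 'v set \<Rightarrow> ('v \<times> 'v) set" where
  "delta_in_set A V = {(i, j) \<in> A. i \<notin> V \<and> j \<in> V}"

definition is_path :: "('v \<times> 'v) set \<Rightarrow> 'v list \<Rightarrow> 'v \<Rightarrow> 'v \<Rightarrow> bool" where
  "is_path A xs u v \<longleftrightarrow> xs \<noteq> [] \<and> hd xs = u \<and> last xs = v \<and> distinct xs \<and>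
     (\<forall>k. Suc k < length xs \<longrightarrow> (xs ! k, xs ! Suc k) \<in> A)"

definition path_cost :: "('v \<times> 'v \<Rightarrow> real) \<Rightarrow> 'v list \<Rightarrow> real" where
  "path_cost d xs = sum_list (map d (zip xs (tl xs)))"

text \<open>R_ij: shortest path time (infinite if j is unreachable from i), R_ii = 0.\<close>
definition sp_dist :: "('v \<times> 'v) set \<Rightarrow> ('v \<times> 'v \<Rightarrow> real) \<Rightarrow> 'v \<Rightarrow> 'v \<Rightarrow> ereal" where
  "sp_dist A d i j = (if i = j then 0
      else Inf {ereal (path_cost d xs) | xs. is_path A xs i j})"

definition stop_instance ::
  "'v set \<Rightarrow> ('v \<times> 'v) set \<Rightarrow> 'v \<Rightarrow> 'v \<Rightarrow> 'v set \<Rightarrow> 'v set \<Rightarrow> ('v \<Rightarrow> nat)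
   \<Rightarrow> ('v \<times> 'v \<Rightarrow> real) \<Rightarrow> nat \<Rightarrow> real \<Rightarrow> bool" where
  "stop_instance N A s t S P p d m T \<longleftrightarrow>
     finite N \<and> A \<subseteq> N \<times> N \<and> (\<forall>i. (i, i) \<notin> A) \<and>
     s \<in> N \<and> t \<in> N \<and> s \<noteq> t \<and>
     S \<subseteq> N - {s, t} \<and> P \<subseteq> N - {s, t} \<and> S \<inter> P = {} \<and> N = S \<union> P \<union> {s, t} \<and>
     (\<forall>i\<in>P. p i > 0) \<and> (\<forall>a\<in>A. d a > 0)"

definition conflict_pairs ::
  "'v set \<Rightarrow> ('v \<times> 'v) set \<Rightarrow> 'v \<Rightarrow> 'v \<Rightarrow> ('v \<times> 'v \<Rightarrow> real) \<Rightarrow> real \<Rightarrow> ('v \<times> 'v) set" where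
  "conflict_pairs N A s t d T = {(i, j). i \<in> N - {s, t} \<and> j \<in> N - {s, t} \<and>
     (\<forall>xs. is_path A xs s t \<and> i \<in> set xs \<and> j \<in> set xs \<longrightarrow> path_cost d xs > T)}"

definition F2_feasible ::
  "'v set \<Rightarrow> ('v \<times> 'v) set \<Rightarrow> 'v \<Rightarrow> 'v \<Rightarrow> 'v set \<Rightarrow> 'v set
   \<Rightarrow> ('v \<times> 'v \<Rightarrow> real) \<Rightarrow> nat \<Rightarrow> real
   \<Rightarrow> ('v \<times> 'v \<Rightarrow> real) \<Rightarrow> ('v \<Rightarrow> real) \<Rightarrow> ('v \<times> 'v \<Rightarrow> real) \<Rightarrow> real \<Rightarrow> bool" where
  "F2_feasible N A s t S P d m T x y f \<phi> \<longleftrightarrow>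
     (\<forall>e\<in>A. x e \<in> {0, 1}) \<and> (\<forall>i\<in>N. y i \<in> {0, 1}) \<and>
     (\<forall>i\<in>S \<union> {s, t}. y i = 1) \<and>
     (\<forall>i\<in>S \<union> P. (\<Sum>j\<in>out_nbrs A i. x (i, j)) = y i) \<and>
     (\<Sum>j\<in>out_nbrs A s. x (s, j)) = real m - \<phi> \<and>
     (\<Sum>i\<in>in_nbrs A t. x (i, t)) = real m - \<phi> \<and>
     (\<Sum>i\<in>in_nbrs A s. x (i, s)) = 0 \<and>
     (\<Sum>j\<in>out_nbrs A t. x (t, j)) = 0 \<and>
     (\<forall>i\<in>S \<union> P. (\<Sum>j\<in>out_nbrs A i. x (i, j)) - (\<Sum>j\<in>in_nbrs A i. x (j, i)) = 0) \<and>
     (\<forall>j\<in>out_nbrs A s. f (s, j) = (T - d (s, j)) * x (s, j)) \<and>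
     (\<forall>i\<in>S \<union> P. (\<Sum>j\<in>in_nbrs A i. f (j, i)) - (\<Sum>j\<in>out_nbrs A i. f (i, j))
                  = (\<Sum>j\<in>out_nbrs A i. d (i, j) * x (i, j))) \<and>
     (\<forall>(i, j)\<in>A. i \<noteq> s \<longrightarrow>
        ereal (f (i, j)) \<le> (ereal T - sp_dist A d s i - ereal (d (i, j))) * ereal (x (i, j))) \<and>
     (\<forall>(i, j)\<in>A. ereal (f (i, j)) \<ge> sp_dist A d j t * ereal (x (i, j))) \<and>
     (\<forall>e\<in>A. f e \<ge> 0) \<and>
     0 \<le> \<phi> \<and> \<phi> \<le> real m"

end

theory Submission
  imports Defs
begin

locale ctx =
  fixes N :: "'v set" and A :: "('v \<times> 'v) set" and s t :: 'v and S P :: "'v set"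
    and p :: "'v \<Rightarrow> nat" and d :: "'v \<times> 'v \<Rightarrow> real" and m :: nat and T :: real
    and x :: "'v \<times> 'v \<Rightarrow> real" and y :: "'v \<Rightarrow> real" and f :: "'v \<times> 'v \<Rightarrow> real"
    and \<phi> :: real
  assumes inst: "stop_instance N A s t S P p d m T"
    and feas: "F2_feasible N A s t S P d m T x y f \<phi>"
begin

definition X where "X e \<longleftrightarrow> e \<in> A \<and> x e = 1"

lemma finN: "finite N" using inst unfolding stop_instance_def by blast
lemma AN: "A \<subseteq> N \<times> N" using inst unfolding stop_instance_def by blast
lemma finA: "finite A" using finN AN finite_subset by blast
lemma x01: "e \<in> A \<Longrightarrow> x e = 0 \<or> x e = 1" using feas unfolding F2_feasible_def by blast
lemma xnn: "e \<in> A \<Longrightarrow> x e \<ge> 0" using x01[of e] by force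
lemma y01: "v \<in> N \<Longrightarrow> y v = 0 \<or> y v = 1" using feas unfolding F2_feasible_def by blast
lemma dpos: "e \<in> A \<Longrightarrow> d e > 0" using inst unfolding stop_instance_def by blast
lemma fnn: "e \<in> A \<Longrightarrow> f e \<ge> 0" using feas unfolding F2_feasible_def by blast
lemma X_N: "X (u,v) \<Longrightarrow> u \<in> N \<and> v \<in> N" using AN unfolding X_def by blast
lemma SP: "v \<in> N \<Longrightarrow> v \<noteq> s \<Longrightarrow> v \<noteq> t \<Longrightarrow> v \<in> S \<union> P"
  using inst unfolding stop_instance_def by blast
lemma SP_N: "v \<in> S \<union> P \<Longrightarrow> v \<in> N"
  using inst unfolding stop_instance_def by blast
lemma SP_ne: "v \<in> S \<union> P \<Longrightarrow> v \<noteq> s \<and> v \<noteq> t"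
  using inst unfolding stop_instance_def by blast

lemma fin_in: "finite (in_nbrs A v)"
proof -
  have "in_nbrs A v \<subseteq> fst ` A" unfolding in_nbrs_def by force
  thus ?thesis using finA finite_subset by blast
qed
lemma fin_out: "finite (out_nbrs A v)"
proof -
  have "out_nbrs A v \<subseteq> snd ` A" unfolding out_nbrs_def by force
  thus ?thesis using finA finite_subset by blast
qed

lemma sum_ge1:
  assumes "finite K" "\<forall>k\<in>K. g k \<ge> (0::real)" "a \<in> K" "g a = 1"
  shows "sum g K \<ge> 1"
  using member_le_sum[OF assms(3)] assms by force

lemma sum_ge2:
  assumes "finite K" "\<forall>k\<in>K. g k \<ge> (0::real)" "a \<in> K" "b \<in> K" "a \<noteq> b" "g a = 1" "g b = 1"
  shows "sum g K \<ge> 2"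
proof -
  have "sum g {a,b} \<le> sum g K" using assms by (intro sum_mono2) auto
  thus ?thesis using assms by simp
qed

lemma sum_single:
  assumes "finite K" "a \<in> K" "\<forall>k\<in>K. k \<noteq> a \<longrightarrow> g k = (0::real)"
  shows "sum g K = g a"
proof -
  have "sum g K = g a + sum g (K - {a})" using sum.remove[OF assms(1,2)] by simp
  also have "sum g (K - {a}) = 0" using assms(3) by (intro sum.neutral) auto
  finally show ?thesis by simp
qed

lemma noin_s: "\<not> X (u, s)"
proof
  assume a: "X (u, s)"
  have "(\<Sum>i\<in>in_nbrs A s. x (i, s)) = 0" using feas unfolding F2_feasible_def by blast
  moreover have "(\<Sum>i\<in>in_nbrs A s. x (i, s)) \<ge> 1"
    using a fin_in xnn unfolding X_def in_nbrs_def by (intro sum_ge1) auto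
  ultimately show False by simp
qed

lemma noout_t: "\<not> X (t, w)"
proof
  assume a: "X (t, w)"
  have "(\<Sum>j\<in>out_nbrs A t. x (t, j)) = 0" using feas unfolding F2_feasible_def by blast
  moreover have "(\<Sum>j\<in>out_nbrs A t. x (t, j)) \<ge> 1"
    using a fin_out xnn unfolding X_def out_nbrs_def by (intro sum_ge1) auto
  ultimately show False by simp
qed

lemma outsum: "v \<in> S \<union> P \<Longrightarrow> (\<Sum>j\<in>out_nbrs A v. x (v, j)) = y v"
  using feas unfolding F2_feasible_def by blast
lemma insum: "v \<in> S \<union> P \<Longrightarrow> (\<Sum>j\<in>in_nbrs A v. x (j, v)) = y v"
proof -
  assume v: "v \<in> S \<union> P"
  have "(\<Sum>j\<in>out_nbrs A v. x (v, j)) - (\<Sum>j\<in>in_nbrs A v. x (j, v)) = 0"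
    using feas v unfolding F2_feasible_def by blast
  thus ?thesis using outsum[OF v] by simp
qed

lemma in_unique: "v \<in> S \<union> P \<Longrightarrow> X (u, v) \<Longrightarrow> X (u', v) \<Longrightarrow> u = u'"
proof (rule ccontr)
  assume v: "v \<in> S \<union> P" and a: "X (u, v)" "X (u', v)" "u \<noteq> u'"
  have "(\<Sum>j\<in>in_nbrs A v. x (j, v)) \<ge> 2"
    using a fin_in xnn unfolding X_def in_nbrs_def by (intro sum_ge2[where a=u and b=u']) auto
  thus False using insum[OF v] y01[OF SP_N[OF v]] by auto
qed

lemma out_unique: "v \<in> S \<union> P \<Longrightarrow> X (v, w) \<Longrightarrow> X (v, w') \<Longrightarrow> w = w'"
proof (rule ccontr)
  assume v: "v \<in> S \<union> P" and a: "X (v, w)" "X (v, w')" "w \<noteq> w'"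
  have "(\<Sum>j\<in>out_nbrs A v. x (v, j)) \<ge> 2"
    using a fin_out xnn unfolding X_def out_nbrs_def by (intro sum_ge2[where a=w and b=w']) auto
  thus False using outsum[OF v] y01[OF SP_N[OF v]] by auto
qed

lemma y_in: "v \<in> S \<union> P \<Longrightarrow> X (u, v) \<Longrightarrow> y v = 1"
proof -
  assume v: "v \<in> S \<union> P" and a: "X (u, v)"
  have "(\<Sum>j\<in>in_nbrs A v. x (j, v)) \<ge> 1"
    using a fin_in xnn unfolding X_def in_nbrs_def by (intro sum_ge1) auto
  thus ?thesis using insum[OF v] y01[OF SP_N[OF v]] by auto
qed

lemma y_out: "v \<in> S \<union> P \<Longrightarrow> X (v, w) \<Longrightarrow> y v = 1"
proof -
  assume v: "v \<in> S \<union> P" and a: "X (v, w)"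
  have "(\<Sum>j\<in>out_nbrs A v. x (v, j)) \<ge> 1"
    using a fin_out xnn unfolding X_def out_nbrs_def by (intro sum_ge1) auto
  thus ?thesis using outsum[OF v] y01[OF SP_N[OF v]] by auto
qed

lemma ex_in: "v \<in> S \<union> P \<Longrightarrow> y v = 1 \<Longrightarrow> \<exists>u. X (u, v)"
proof (rule ccontr)
  assume v: "v \<in> S \<union> P" "y v = 1" and n: "\<nexists>u. X (u, v)"
  have "(\<Sum>j\<in>in_nbrs A v. x (j, v)) = 0"
    using n x01 unfolding X_def in_nbrs_def by (intro sum.neutral) force
  thus False using insum[OF v(1)] v by simp
qed

lemma ex_out: "v \<in> S \<union> P \<Longrightarrow> y v = 1 \<Longrightarrow> \<exists>w. X (v, w)"
proof (rule ccontr)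
  assume v: "v \<in> S \<union> P" "y v = 1" and n: "\<nexists>w. X (v, w)"
  have "(\<Sum>j\<in>out_nbrs A v. x (v, j)) = 0"
    using n x01 unfolding X_def out_nbrs_def by (intro sum.neutral) force
  thus False using outsum[OF v(1)] v by simp
qed

lemma f0: "e \<in> A \<Longrightarrow> \<not> X e \<Longrightarrow> f e = 0"
proof -
  assume e: "e \<in> A" "\<not> X e"
  then have x0: "x e = 0" using x01 unfolding X_def by blast
  obtain u v where uv: "e = (u, v)" by force
  show "f e = 0"
  proof (cases "u = s")
    case True
    then have "v \<in> out_nbrs A s" using e uv unfolding out_nbrs_def by simp
    then have "f (s, v) = (T - d (s, v)) * x (s, v)" using feas unfolding F2_feasible_def by blast
    then show ?thesis using x0 uv True by simp
  next
    case False
    then have "ereal (f e) \<le> (ereal T - sp_dist A d s u - ereal (d (u, v))) * ereal (x (u, v))"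
      using feas e uv unfolding F2_feasible_def by fastforce
    then have "f e \<le> 0" using x0 uv by (simp add: zero_ereal_def[symmetric])
    then show ?thesis using fnn[OF e(1)] by simp
  qed
qed

lemma f_s: "X (s, v) \<Longrightarrow> f (s, v) = T - d (s, v)"
proof -
  assume a: "X (s, v)"
  then have "v \<in> out_nbrs A s" unfolding X_def out_nbrs_def by simp
  then have "f (s, v) = (T - d (s, v)) * x (s, v)" using feas unfolding F2_feasible_def by blast
  then show ?thesis using a unfolding X_def by simp
qed

lemma f_step: "v \<in> S \<union> P \<Longrightarrow> X (u, v) \<Longrightarrow> X (v, w) \<Longrightarrow> f (u, v) = f (v, w) + d (v, w)"
proof -
  assume v: "v \<in> S \<union> P" and a: "X (u, v)" "X (v, w)"
  have c: "(\<Sum>j\<in>in_nbrs A v. f (j, v)) - (\<Sum>j\<in>out_nbrs A v. f (v, j))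
                  = (\<Sum>j\<in>out_nbrs A v. d (v, j) * x (v, j))"
    using feas v unfolding F2_feasible_def by blast
  have 1: "(\<Sum>j\<in>in_nbrs A v. f (j, v)) = f (u, v)"
    using a in_unique[OF v] f0 fin_in unfolding in_nbrs_def
    by (intro sum_single) (auto simp: X_def)
  have 2: "(\<Sum>j\<in>out_nbrs A v. f (v, j)) = f (v, w)"
    using a out_unique[OF v] f0 fin_out unfolding out_nbrs_def
    by (intro sum_single) (auto simp: X_def)
  have 3: "(\<Sum>j\<in>out_nbrs A v. d (v, j) * x (v, j)) = d (v, w) * x (v, w)"
    using a out_unique[OF v] x01 fin_out unfolding out_nbrs_def
    by (intro sum_single) (auto simp: X_def)
  show ?thesis using c 1 2 3 a by (simp add: X_def)
qed

definition walk where "walk xs \<longleftrightarrow> (\<forall>k. Suc k < length xs \<longrightarrow> X (xs ! k, xs ! Suc k))"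

lemma walkD: "walk xs \<Longrightarrow> Suc k < length xs \<Longrightarrow> X (xs ! k, xs ! Suc k)"
  unfolding walk_def by blast

lemma BW:
  assumes "walk xs" "length xs \<ge> 2"
  shows "\<exists>zs. walk zs \<and> zs ! 0 = s \<and> length zs \<ge> length xs \<and> drop (length zs - length xs) zs = xs"
  using assms
proof (induction "card {e\<in>A. f e > f (xs!0, xs!1)}" arbitrary: xs rule: less_induct)
  case less
  show ?case
  proof (cases "xs!0 = s")
    case True
    then have "drop (length xs - length xs) xs = xs" by simp
    then show ?thesis using less.prems True by blast
  next
    case False
    let ?u = "xs!0"
    have Xu: "X (?u, xs!1)" using walkD[OF less.prems(1), of 0] less.prems(2) by simp
    have uN: "?u \<in> N" using X_N[OF Xu] by blast
    have ut: "?u \<noteq> t" using noout_t Xu by metis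
    have uSP: "?u \<in> S \<union> P" using SP[OF uN False ut] .
    obtain w where w: "X (w, ?u)" using ex_in[OF uSP] y_out[OF uSP Xu] by blast
    have fs: "f (w, ?u) = f (?u, xs!1) + d (?u, xs!1)" using f_step[OF uSP w Xu] .
    have dp: "d (?u, xs!1) > 0" using dpos Xu unfolding X_def by blast
    let ?ys = "w # xs"
    have wy: "walk ?ys" unfolding walk_def
    proof (intro allI impI)
      fix k assume k: "Suc k < length ?ys"
      show "X (?ys ! k, ?ys ! Suc k)"
      proof (cases k)
        case 0 then show ?thesis using w by simp
      next
        case (Suc k') then show ?thesis using walkD[OF less.prems(1), of k'] k by simp
      qed
    qed
    have sub: "{e\<in>A. f e > f (?ys!0, ?ys!1)} \<subset> {e\<in>A. f e > f (xs!0, xs!1)}"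
    proof
      show "{e\<in>A. f e > f (?ys!0, ?ys!1)} \<subseteq> {e\<in>A. f e > f (xs!0, xs!1)}"
        using fs dp by force
      have "(w, ?u) \<in> A" using w unfolding X_def by blast
      moreover have "f (w, ?u) > f (xs!0, xs!1)" using fs dp by simp
      ultimately have "(w, ?u) \<in> {e\<in>A. f e > f (xs!0, xs!1)}" by blast
      moreover have "(w, ?u) \<notin> {e\<in>A. f e > f (?ys!0, ?ys!1)}" by simp
      ultimately show "{e\<in>A. f e > f (?ys!0, ?ys!1)} \<noteq> {e\<in>A. f e > f (xs!0, xs!1)}"
        by blast
    qed
    have lt: "card {e\<in>A. f e > f (?ys!0, ?ys!1)} < card {e\<in>A. f e > f (xs!0, xs!1)}"
      using psubset_card_mono[OF _ sub] finA by simp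
    obtain zs where zs: "walk zs" "zs ! 0 = s" "length zs \<ge> length ?ys"
      "drop (length zs - length ?ys) zs = ?ys"
      using less.hyps[OF lt wy] less.prems(2) by auto
    have "drop (length zs - length xs) zs = drop 1 (drop (length zs - length ?ys) zs)"
      using zs(3) by (simp add: Suc_diff_Suc)
    also have "\<dots> = xs" using zs(4) by simp
    finally show ?thesis using zs by auto
  qed
qed

lemma FW:
  assumes "walk xs" "length xs \<ge> 2"
  shows "\<exists>zs. walk zs \<and> zs ! (length zs - 1) = t \<and> length zs \<ge> length xs \<and> take (length xs) zs = xs"
  using assms
proof (induction "card {e\<in>A. f e < f (xs!(length xs - 2), xs!(length xs - 1))}" arbitrary: xs rule: less_induct)
  case less
  define n where "n = length xs - 2"
  have ln: "length xs = Suc (Suc n)" using less.prems(2) unfolding n_def by simp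
  have i1: "length xs - 1 = Suc n" using ln by simp
  have i2: "length xs - 2 = n" using ln by simp
  show ?case
  proof (cases "xs!(Suc n) = t")
    case True
    then have "take (length xs) xs = xs" by simp
    then show ?thesis using less.prems True i1 by auto
  next
    case False
    let ?u = "xs!n"
    let ?v = "xs!Suc n"
    have Xu: "X (?u, ?v)" using walkD[OF less.prems(1), of n] ln by simp
    have vN: "?v \<in> N" using X_N[OF Xu] by blast
    have vs: "?v \<noteq> s" using noin_s Xu by metis
    have vSP: "?v \<in> S \<union> P" using SP[OF vN vs False] .
    obtain w where w: "X (?v, w)" using ex_out[OF vSP] y_in[OF vSP Xu] by blast
    have fs: "f (?u, ?v) = f (?v, w) + d (?v, w)" using f_step[OF vSP Xu w] .
    have dp: "d (?v, w) > 0" using dpos w unfolding X_def by blast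
    let ?ys = "xs @ [w]"
    have ly: "length ?ys = Suc (Suc (Suc n))" using ln by simp
    have wy: "walk ?ys" unfolding walk_def
    proof (intro allI impI)
      fix k assume k: "Suc k < length ?ys"
      show "X (?ys ! k, ?ys ! Suc k)"
      proof (cases "k = Suc n")
        case True then show ?thesis using w ln by (simp add: nth_append)
      next
        case False
        then have "Suc k < length xs" using k ln by simp
        then show ?thesis using walkD[OF less.prems(1), of k] by (simp add: nth_append)
      qed
    qed
    have y1: "?ys!(length ?ys - 2) = ?v" using ln by (simp add: nth_append)
    have y2: "?ys!(length ?ys - 1) = w" using ln by (simp add: nth_append)
    have sub: "{e\<in>A. f e < f (?ys!(length ?ys - 2), ?ys!(length ?ys - 1))}
       \<subset> {e\<in>A. f e < f (xs!(length xs - 2), xs!(length xs - 1))}"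
      unfolding y1 y2 i1 i2
    proof
      show "{e\<in>A. f e < f (?v, w)} \<subseteq> {e\<in>A. f e < f (?u, ?v)}"
        using fs dp by force
      have "(?v, w) \<in> A" using w unfolding X_def by blast
      moreover have "f (?v, w) < f (?u, ?v)" using fs dp by simp
      ultimately have "(?v, w) \<in> {e\<in>A. f e < f (?u, ?v)}" by blast
      moreover have "(?v, w) \<notin> {e\<in>A. f e < f (?v, w)}" by simp
      ultimately show "{e\<in>A. f e < f (?v, w)} \<noteq> {e\<in>A. f e < f (?u, ?v)}"
        by blast
    qed
    have lt: "card {e\<in>A. f e < f (?ys!(length ?ys - 2), ?ys!(length ?ys - 1))}
       < card {e\<in>A. f e < f (xs!(length xs - 2), xs!(length xs - 1))}"
      using psubset_card_mono[OF _ sub] finA by simp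
    obtain zs where zs: "walk zs" "zs ! (length zs - 1) = t" "length zs \<ge> length ?ys"
      "take (length ?ys) zs = ?ys"
      using less.hyps[OF lt wy] ly by auto
    have "take (length xs) zs = take (length xs) (take (length ?ys) zs)" by simp
    also have "\<dots> = xs" using zs(4) by simp
    finally show ?thesis using zs by auto
  qed
qed

lemma BD:
  assumes "walk xs" "walk ys" "a < length xs" "b < length ys" "xs!a = ys!b" "xs!a \<noteq> t"
  shows "k \<le> a \<Longrightarrow> k \<le> b \<Longrightarrow> xs!(a-k) = ys!(b-k)"
proof (induction k)
  case 0 then show ?case using assms by simp
next
  case (Suc k)
  let ?v = "xs!(a-k)"
  have e1: "a - k = Suc (a - Suc k)" "b - k = Suc (b - Suc k)" using Suc.prems by auto
  have v: "?v = ys!(b-k)" using Suc by simp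
  have l1: "Suc (a - Suc k) < length xs" using e1 assms(3) by linarith
  have l2: "Suc (b - Suc k) < length ys" using e1 assms(4) by linarith
  have X1: "X (xs!(a - Suc k), ?v)" using walkD[OF assms(1) l1] e1(1) by simp
  have X2: "X (ys!(b - Suc k), ?v)" using walkD[OF assms(2) l2] e1(2) v by simp
  have vN: "?v \<in> N" using X_N[OF X1] by blast
  have vs: "?v \<noteq> s" using noin_s X1 by metis
  have vt: "?v \<noteq> t"
  proof (cases k)
    case 0 then show ?thesis using assms(6) by simp
  next
    case (Suc k')
    have "Suc (a - k) < length xs" using Suc \<open>Suc k \<le> a\<close> assms(3) by linarith
    then have "X (?v, xs!Suc (a-k))" using walkD[OF assms(1)] by blast
    then show ?thesis using noout_t by metis
  qed
  have vSP: "?v \<in> S \<union> P" using SP[OF vN vs vt] .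
  show ?case using in_unique[OF vSP X1 X2] by simp
qed

lemma FD:
  assumes "walk xs" "walk ys" "1 \<le> c" "xs!c = ys!c" "c \<le> l"
  shows "l < length xs \<Longrightarrow> l < length ys \<Longrightarrow> xs!l = ys!l"
  using assms(5)
proof (induction l rule: dec_induct)
  case base then show ?case using assms(4) by simp
next
  case (step l)
  let ?v = "xs!l"
  have l1: "Suc (l - 1) = l" using step.hyps assms(3) by simp
  have X0: "X (xs!(l-1), ?v)" using walkD[OF assms(1), of "l-1"] l1 step.prems by simp
  have X1: "X (?v, xs!Suc l)" using walkD[OF assms(1), of l] step.prems by simp
  have X2: "X (?v, ys!Suc l)" using walkD[OF assms(2), of l] step.prems step.IH by simp
  have vN: "?v \<in> N" using X_N[OF X1] by blast
  have vs: "?v \<noteq> s" using noin_s X0 by metis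
  have vt: "?v \<noteq> t" using noout_t X1 by metis
  have vSP: "?v \<in> S \<union> P" using SP[OF vN vs vt] .
  show ?case using out_unique[OF vSP X1 X2] by simp
qed

definition route where "route R \<longleftrightarrow> walk R \<and> length R \<ge> 2 \<and> R!0 = s \<and> R!(length R - 1) = t"

lemma route_eq:
  assumes R1: "route R1" and R2: "route R2" and a: "Suc a < length R1" and b: "Suc b < length R2"
    and e1: "R1!a = R2!b" and e2: "R1!Suc a = R2!Suc b"
  shows "R1 = R2"
proof -
  have w1: "walk R1" and w2: "walk R2" using R1 R2 unfolding route_def by auto
  have nt: "R1!a \<noteq> t" using walkD[OF w1 a] noout_t by metis
  have bd: "\<And>k. k \<le> a \<Longrightarrow> k \<le> b \<Longrightarrow> R1!(a-k) = R2!(b-k)"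
    using BD[OF w1 w2 _ _ e1 nt] a b by simp
  have ab: "a = b"
  proof (rule ccontr)
    assume "a \<noteq> b"
    then consider "a < b" | "b < a" by linarith
    then show False
    proof cases
      case 1
      have "R1!0 = R2!(b-a)" using bd[of a] 1 by simp
      then have "R2!(b-a) = s" using R1 unfolding route_def by simp
      moreover have "X (R2!(b-a-1), R2!Suc (b-a-1))" using walkD[OF w2, of "b-a-1"] 1 b by simp
      moreover have "Suc (b-a-1) = b-a" using 1 by simp
      ultimately show False using noin_s by metis
    next
      case 2
      have "R1!(a-b) = R2!0" using bd[of b] 2 by simp
      then have "R1!(a-b) = s" using R2 unfolding route_def by simp
      moreover have "X (R1!(a-b-1), R1!Suc (a-b-1))" using walkD[OF w1, of "a-b-1"] 2 a by simp
      moreover have "Suc (a-b-1) = a-b" using 2 by simp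
      ultimately show False using noin_s by metis
    qed
  qed
  have lo: "\<And>l. l \<le> a \<Longrightarrow> R1!l = R2!l"
  proof -
    fix l assume l: "l \<le> a"
    have "R1!(a-(a-l)) = R2!(b-(a-l))" using bd[of "a-l"] ab by simp
    then show "R1!l = R2!l" using l ab by simp
  qed
  have hi: "\<And>l. Suc a \<le> l \<Longrightarrow> l < length R1 \<Longrightarrow> l < length R2 \<Longrightarrow> R1!l = R2!l"
    using FD[OF w1 w2, of "Suc a"] e2 ab by simp
  have all: "\<And>l. l < length R1 \<Longrightarrow> l < length R2 \<Longrightarrow> R1!l = R2!l"
    using lo hi by (meson not_less_eq_eq)
  have len: "length R1 = length R2"
  proof (rule ccontr)
    assume "length R1 \<noteq> length R2"
    then consider "length R1 < length R2" | "length R2 < length R1" by linarith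
    then show False
    proof cases
      case 1
      let ?l = "length R1 - 1"
      have "?l < length R1" using R1 unfolding route_def by auto
      then have "R2!?l = t" using all[of ?l] R1 1 unfolding route_def by simp
      moreover have "X (R2!?l, R2!Suc ?l)" using walkD[OF w2, of ?l] 1 a by simp
      ultimately show False using noout_t by metis
    next
      case 2
      let ?l = "length R2 - 1"
      have "?l < length R2" using R2 unfolding route_def by auto
      then have "R1!?l = t" using all[of ?l] R2 2 unfolding route_def by simp
      moreover have "X (R1!?l, R1!Suc ?l)" using walkD[OF w1, of ?l] 2 b by simp
      ultimately show False using noout_t by metis
    qed
  qed
  show ?thesis using len all by (simp add: nth_equalityI)
qed

lemma route_distinct:
  assumes R: "route R" shows "distinct R"
proof -
  have w: "walk R" using R unfolding route_def by auto
  have "R!a \<noteq> R!b" if ab: "a < b" "b < length R" for a b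
  proof
    assume eq: "R!a = R!b"
    have X1: "X (R!a, R!Suc a)" using walkD[OF w, of a] ab by simp
    have nt: "R!a \<noteq> t" using X1 noout_t by metis
    have "R!(a-a) = R!(b-a)" using BD[OF w w _ _ eq nt, of a] ab by simp
    then have "R!(b-a) = s" using R unfolding route_def by simp
    moreover have "X (R!(b-a-1), R!Suc (b-a-1))" using walkD[OF w, of "b-a-1"] ab by simp
    moreover have "Suc (b-a-1) = b-a" using ab by simp
    ultimately show False using noin_s by metis
  qed
  then show ?thesis by (metis distinct_conv_nth linorder_neqE_nat)
qed

lemma path_cost_eq: "path_cost d xs = (\<Sum>k<length xs - 1. d (xs!k, xs!Suc k))"
  unfolding path_cost_def sum_list_sum_nth
  by (intro sum.cong) (auto simp: nth_tl lessThan_atLeast0)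

lemma f_route:
  assumes w: "walk R" and s0: "R!0 = s"
  shows "Suc l < length R \<Longrightarrow> f (R!l, R!Suc l) = T - (\<Sum>k\<le>l. d (R!k, R!Suc k))"
proof (induction l)
  case 0
  then show ?case using f_s walkD[OF w, of 0] s0 by simp
next
  case (Suc l)
  let ?v = "R!Suc l"
  have X0: "X (R!l, ?v)" using walkD[OF w, of l] Suc.prems by simp
  have X1: "X (?v, R!Suc (Suc l))" using walkD[OF w, of "Suc l"] Suc.prems by simp
  have vN: "?v \<in> N" using X_N[OF X1] by blast
  have vs: "?v \<noteq> s" using noin_s X0 by metis
  have vt: "?v \<noteq> t" using noout_t X1 by metis
  have vSP: "?v \<in> S \<union> P" using SP[OF vN vs vt] .
  have "f (R!l, ?v) = f (?v, R!Suc (Suc l)) + d (?v, R!Suc (Suc l))" using f_step[OF vSP X0 X1] .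
  then show ?case using Suc by simp
qed

lemma route_cost:
  assumes R: "route R" shows "path_cost d R \<le> T"
proof -
  have w: "walk R" and s0: "R!0 = s" and l2: "length R \<ge> 2" using R unfolding route_def by auto
  define n where "n = length R - 2"
  have ln: "length R = Suc (Suc n)" using l2 unfolding n_def by simp
  have "f (R!n, R!Suc n) = T - (\<Sum>k\<le>n. d (R!k, R!Suc k))" using f_route[OF w s0, of n] ln by simp
  moreover have "f (R!n, R!Suc n) \<ge> 0" using fnn walkD[OF w, of n] ln unfolding X_def by simp
  moreover have "path_cost d R = (\<Sum>k\<le>n. d (R!k, R!Suc k))"
    unfolding path_cost_eq ln by (simp add: lessThan_Suc_atMost)
  ultimately show ?thesis by simp
qed

lemma route_path: assumes R: "route R" shows "is_path A R s t"
proof -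
  have ne: "R \<noteq> []" using R unfolding route_def by auto
  show ?thesis unfolding is_path_def using route_distinct[OF R] walkD R ne
    by (auto simp: route_def X_def hd_conv_nth last_conv_nth)
qed

lemma through:
  assumes vSP: "v \<in> S \<union> P" and yv: "y v = 1"
  shows "\<exists>R q. route R \<and> 0 < q \<and> Suc q < length R \<and> R!q = v"
proof -
  obtain u where u: "X (u, v)" using ex_in[OF vSP yv] by blast
  have wu: "walk [u, v]" unfolding walk_def using u by (auto simp: less_Suc_eq)
  have l2: "length [u, v] \<ge> 2" by simp
  obtain zs where zs0: "walk zs" "zs!0 = s" "length zs \<ge> length [u, v]"
     "drop (length zs - length [u, v]) zs = [u, v]"
    using BW[OF wu l2] by blast
  have zs: "walk zs" "zs!0 = s" "length zs \<ge> 2" "drop (length zs - 2) zs = [u, v]"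
    using zs0 by (simp_all add: numeral_2_eq_2)
  have zv: "zs!(length zs - 1) = v"
  proof -
    have "drop (length zs - 2) zs ! 1 = zs ! (length zs - 2 + 1)" using zs(3) by (simp add: nth_drop)
    moreover have "length zs - 2 + 1 = length zs - 1" using zs(3) by simp
    ultimately show ?thesis using zs(4) by simp
  qed
  obtain R where R: "walk R" "R!(length R - 1) = t" "length R \<ge> length zs" "take (length zs) R = zs"
    using FW[OF zs(1,3)] by blast
  have nth: "\<And>k. k < length zs \<Longrightarrow> R!k = zs!k" using R(4) by (metis nth_take)
  let ?q = "length zs - 1"
  have Rq: "R!?q = v" using nth[of ?q] zv zs(3) by simp
  have R0: "R!0 = s" using nth[of 0] zs(2,3) by fastforce
  have vs: "v \<noteq> s" and vt: "v \<noteq> t" using SP_ne[OF vSP] by auto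
  have q0: "0 < ?q" using Rq R0 vs zs(3) by (metis gr0I)
  have qR: "Suc ?q < length R"
  proof (rule ccontr)
    assume "\<not> Suc ?q < length R"
    then have "length R - 1 = ?q" using R(3) zs(3) by simp
    then show False using R(2) Rq vt by simp
  qed
  have "route R" unfolding route_def using R R0 zs(3) by simp
  then show ?thesis using q0 qR Rq by blast
qed

lemma crossing: "\<not> Q (0::nat) \<Longrightarrow> Q q \<Longrightarrow> \<exists>a<q. \<not> Q a \<and> Q (Suc a)"
proof (induction q)
  case 0 then show ?case by simp
next
  case (Suc q)
  then show ?case by (cases "Q q") (auto intro: less_SucI)
qed

lemma entry:
  assumes vSP: "v \<in> S \<union> P" and yv: "y v = 1" and vV: "v \<in> V" and sV: "s \<notin> V"
  shows "\<exists>R a. route R \<and> Suc a < length R \<and> R!a \<notin> V \<and> R!Suc a \<in> V \<and> v \<in> set R"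
proof -
  obtain R q where R: "route R" "0 < q" "Suc q < length R" "R!q = v" using through[OF vSP yv] by blast
  have "R!0 \<notin> V" using R(1) sV unfolding route_def by simp
  then obtain a where a: "a < q" "R!a \<notin> V" "R!Suc a \<in> V"
    using crossing[of "\<lambda>k. R!k \<in> V" q] R(4) vV by blast
  have "v \<in> set R" using R(3,4) by (metis Suc_lessD nth_mem)
  then show ?thesis using R a by (intro exI[of _ R] exI[of _ a]) auto
qed

lemma main:
  assumes K: "(i, j) \<in> conflict_pairs N A s t d T"
    and VN: "V \<subseteq> N - {s}" and iV: "i \<in> V" and jV: "j \<in> V"
  shows "(\<Sum>e\<in>delta_in_set A V. x e) \<ge> y i + y j"
proof -
  have ij: "i \<in> N - {s,t}" "j \<in> N - {s,t}" using K unfolding conflict_pairs_def by auto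
  have Kc: "\<And>R. is_path A R s t \<Longrightarrow> i \<in> set R \<Longrightarrow> j \<in> set R \<Longrightarrow> path_cost d R > T"
    using K unfolding conflict_pairs_def by auto
  have iSP: "i \<in> S \<union> P" and jSP: "j \<in> S \<union> P" using ij SP by auto
  have sV: "s \<notin> V" using VN by blast
  let ?D = "delta_in_set A V"
  have finD: "finite ?D" using finA unfolding delta_in_set_def by (auto intro: finite_subset)
  have nnD: "\<forall>e\<in>?D. x e \<ge> 0" using xnn unfolding delta_in_set_def by auto
  have ent: "\<exists>R a. route R \<and> Suc a < length R \<and> (R!a, R!Suc a) \<in> ?D \<and> x (R!a, R!Suc a) = 1 \<and> v \<in> set R"
    if vv: "v \<in> S \<union> P" "y v = 1" "v \<in> V" for v
  proof -
    obtain R a where R: "route R" "Suc a < length R" "R!a \<notin> V" "R!Suc a \<in> V" "v \<in> set R"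
      using entry[OF vv sV] by blast
    have "X (R!a, R!Suc a)" using walkD[OF _ R(2)] R(1) unfolding route_def by blast
    then show ?thesis using R unfolding delta_in_set_def X_def by blast
  qed
  have s0: "0 \<le> (\<Sum>e\<in>?D. x e)" using nnD by (simp add: sum_nonneg)
  consider "y i = 0" "y j = 0" | "y i = 1" "y j = 0" | "y i = 0" "y j = 1" | "y i = 1" "y j = 1"
    using y01 ij by blast
  then show ?thesis
  proof cases
    case 1 then show ?thesis using s0 by simp
  next
    case 2
    obtain R a where "(R!a, R!Suc a) \<in> ?D" "x (R!a, R!Suc a) = 1" using ent[OF iSP 2(1) iV] by blast
    then show ?thesis using sum_ge1[OF finD nnD] 2 by simp
  next
    case 3
    obtain R a where "(R!a, R!Suc a) \<in> ?D" "x (R!a, R!Suc a) = 1" using ent[OF jSP 3(2) jV] by blast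
    then show ?thesis using sum_ge1[OF finD nnD] 3 by simp
  next
    case 4
    obtain R1 a1 where R1: "route R1" "Suc a1 < length R1" "(R1!a1, R1!Suc a1) \<in> ?D"
        "x (R1!a1, R1!Suc a1) = 1" "i \<in> set R1" using ent[OF iSP 4(1) iV] by blast
    obtain R2 a2 where R2: "route R2" "Suc a2 < length R2" "(R2!a2, R2!Suc a2) \<in> ?D"
        "x (R2!a2, R2!Suc a2) = 1" "j \<in> set R2" using ent[OF jSP 4(2) jV] by blast
    have ne: "(R1!a1, R1!Suc a1) \<noteq> (R2!a2, R2!Suc a2)"
    proof
      assume "(R1!a1, R1!Suc a1) = (R2!a2, R2!Suc a2)"
      then have "R1 = R2" using route_eq[OF R1(1) R2(1) R1(2) R2(2)] by simp
      then have "path_cost d R1 > T" using Kc[OF route_path[OF R1(1)] R1(5)] R2(5) by simp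
      then show False using route_cost[OF R1(1)] by simp
    qed
    have "(\<Sum>e\<in>?D. x e) \<ge> 2" using sum_ge2[OF finD nnD R1(3) R2(3) ne R1(4) R2(4)] .
    then show ?thesis using 4 by simp
  qed
qed

end

theorem proposition2:
  fixes N :: "'v set" and A :: "('v \<times> 'v) set" and s t :: 'v and S P :: "'v set"
    and p :: "'v \<Rightarrow> nat" and d :: "'v \<times> 'v \<Rightarrow> real" and m :: nat and T :: real
    and x :: "'v \<times> 'v \<Rightarrow> real" and y :: "'v \<Rightarrow> real" and f :: "'v \<times> 'v \<Rightarrow> real"
    and \<phi> :: real and i j :: 'v and V :: "'v set"
  assumes "stop_instance N A s t S P p d m T"
    and "F2_feasible N A s t S P d m T x y f \<phi>"
    and "(i, j) \<in> conflict_pairs N A s t d T"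
    and "V \<subseteq> N - {s}" and "i \<in> V" and "j \<in> V"
  shows "(\<Sum>e\<in>delta_in_set A V. x e) \<ge> y i + y j"
proof -
  interpret ctx N A s t S P p d m T x y f \<phi> using assms(1,2) by (rule ctx.intro)
  show ?thesis using main assms(3-6) by blast
qed

end
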